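(* Let $(\Omega,\Sigma,\mu)$ be a measure space and $1<r<p<\infty$. There is a set $\Gamma$ of measures on $\Sigma$ such that $(L^{p,\infty}(\mu),\|\cdot\|_{L^{p,\infty}_r})$ lattice isometrically embeds into $(\bigoplus_{\nu\in\Gamma}(L^{p,\infty}(\nu),\|\cdot\|_{L^{p,\infty}_1}))_\infty$.
   Context: $L^{p,\infty}(\mu)$ is the space of measurable $f$ with $\sup_{t>0}t\,\mu(\{|f|>t\})^{1/p}<\infty$. For $1\le r<p$, $\|f\|_{L^{p,\infty}_r}=\sup_{0<\mu(A)<\infty}\mu(A)^{-\frac1r+\frac1p}(\int_A|f|^r\,d\mu)^{1/r}$; this is an equivalent lattice norm on $L^{p,\infty}(\mu)$. *)

theory Defs
  imports "HOL-Analysis.Analysis"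
begin

definition enn_rpow :: "ennreal \<Rightarrow> real \<Rightarrow> ennreal" where
  "enn_rpow x a = (if x = \<infinity> then \<infinity> else ennreal (enn2real x powr a))"

definition weak_Lp :: "'a measure \<Rightarrow> real \<Rightarrow> ('a \<Rightarrow> real) \<Rightarrow> bool" where
  "weak_Lp M p f \<longleftrightarrow> f \<in> borel_measurable M \<and>
     (SUP t\<in>{0<..}. ennreal t * enn_rpow (emeasure M {x \<in> space M. t < \<bar>f x\<bar>}) (1 / p)) < \<infinity>"

definition wLp_norm :: "'a measure \<Rightarrow> real \<Rightarrow> real \<Rightarrow> ('a \<Rightarrow> real) \<Rightarrow> ennreal" where
  "wLp_norm M p r f =
     (SUP A\<in>{A \<in> sets M. 0 < emeasure M A \<and> emeasure M A < \<infinity>}.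
        ennreal (measure M A powr (1 / p - 1 / r)) *
        enn_rpow (\<integral>\<^sup>+ x\<in>A. ennreal (\<bar>f x\<bar> powr r) \<partial>M) (1 / r))"

end

theory Submission
  imports Defs
begin



lemma enn_rpow_one: "enn_rpow x 1 = x"
  by (cases x) (auto simp: enn_rpow_def)

lemma enn_rpow_ennreal: "0 \<le> x \<Longrightarrow> enn_rpow (ennreal x) e = ennreal (x powr e)"
  by (simp add: enn_rpow_def)

lemma enn_rpow_top: "enn_rpow top e = top"
  by (simp add: enn_rpow_def)

lemma enn_rpow_mono:
  assumes "x \<le> y" "0 < e" shows "enn_rpow x e \<le> enn_rpow y e"
proof (cases "y = \<infinity>")
  case True then show ?thesis by (simp add: enn_rpow_def)
next
  case False
  then have "x \<noteq> \<infinity>" using assms by (auto simp: top_unique)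
  moreover have "enn2real x \<le> enn2real y" using assms False by (simp add: enn2real_mono top.not_eq_extremum)
  ultimately show ?thesis using False assms
    by (auto simp: enn_rpow_def intro!: ennreal_leI powr_mono2)
qed

lemma enn_rpow_cmult:
  assumes "0 < c" shows "enn_rpow (ennreal c * x) e = ennreal (c powr e) * enn_rpow x e"
proof (cases "x = \<infinity>")
  case True then show ?thesis using assms by (simp add: enn_rpow_def ennreal_mult_top)
next
  case False
  then obtain xr where x: "x = ennreal xr" "0 \<le> xr" by (cases x) auto
  then show ?thesis using assms
    by (simp add: enn_rpow_def ennreal_mult[symmetric] powr_mult del: ennreal_mult)
qed




definition alp :: "real \<Rightarrow> real \<Rightarrow> real" where "alp p r = (1/r - 1/p) / (1 - 1/p)"
definition bet :: "real \<Rightarrow> real \<Rightarrow> real" where "bet p r = (1 - 1/r) / (1 - 1/p)"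
definition kap :: "real \<Rightarrow> real \<Rightarrow> real" where
  "kap p r = (alp p r powr alp p r * bet p r powr bet p r) powr (1 - 1/p)"

lemma alp_bet:
  assumes r: "1 < r" and rp: "r < p"
  shows "0 < alp p r" "0 < bet p r" "alp p r + bet p r = 1"
    "alp p r * (1 - 1/p) = 1/r - 1/p" "bet p r * (1 - 1/p) = 1 - 1/r" "0 < kap p r"
proof -
  have p1: "1/p < 1" using r rp by simp
  have rp': "1/p < 1/r" using r rp by (simp add: frac_less2)
  have r1: "1/r < 1" using r by simp
  show a: "0 < alp p r" and b: "0 < bet p r" using p1 rp' r1 unfolding alp_def bet_def by auto
  show "alp p r + bet p r = 1" using p1 unfolding alp_def bet_def by (auto simp add: add_divide_distrib[symmetric])
  show "alp p r * (1 - 1/p) = 1/r - 1/p" "bet p r * (1 - 1/p) = 1 - 1/r"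
    using p1 unfolding alp_def bet_def by auto
  show "0 < kap p r" using a b unfolding kap_def by simp
qed

lemma real_key:
  fixes r p m P :: real
  assumes r: "1 < r" and rp: "r < p" and m: "0 < m" and P: "0 \<le> P"
  shows "(m + P) powr (1/p - 1) * P powr (1 - 1/r) \<le> kap p r * m powr (1/p - 1/r)"
proof (cases "P = 0")
  case True
  then show ?thesis using r alp_bet[OF r rp] by simp
next
  case False
  with P have Pp: "P > 0" by simp
  note ab = alp_bet[OF r rp]
  define \<alpha> where "\<alpha> = alp p r"
  define \<beta> where "\<beta> = bet p r"
  have al: "0 < \<alpha>" and be: "0 < \<beta>" and abs: "\<alpha> + \<beta> = 1" using ab by (auto simp: \<alpha>_def \<beta>_def)
  define V where "V = m + P"
  have Vp: "V > 0" using m Pp by (simp add: V_def)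
  have "(m/\<alpha>) powr \<alpha> * (P/\<beta>) powr \<beta> \<le> \<alpha> * (m/\<alpha>) + \<beta> * (P/\<beta>)"
    by (rule Youngs_inequality_0) (use al be abs m Pp in auto)
  also have "\<alpha> * (m/\<alpha>) + \<beta> * (P/\<beta>) = V" using al be by (simp add: V_def)
  also have "(m/\<alpha>) powr \<alpha> * (P/\<beta>) powr \<beta> = (m powr \<alpha> * P powr \<beta>) / (\<alpha> powr \<alpha> * \<beta> powr \<beta>)"
    using al be m Pp by (simp add: powr_divide)
  finally have mpV: "m powr \<alpha> * P powr \<beta> \<le> (\<alpha> powr \<alpha> * \<beta> powr \<beta>) * V"
    using al be by (simp add: divide_le_eq mult.commute)
  have e: "0 < 1 - 1/p" using r rp by simp
  have "(m powr \<alpha> * P powr \<beta>) powr (1 - 1/p) \<le> ((\<alpha> powr \<alpha> * \<beta> powr \<beta>) * V) powr (1 - 1/p)"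
    using mpV e by (intro powr_mono2) auto
  also have "(m powr \<alpha> * P powr \<beta>) powr (1 - 1/p) = m powr (1/r - 1/p) * P powr (1 - 1/r)"
    using m Pp e ab by (simp add: powr_mult powr_powr \<alpha>_def \<beta>_def)
  also have "((\<alpha> powr \<alpha> * \<beta> powr \<beta>) * V) powr (1 - 1/p) = kap p r * V powr (1 - 1/p)"
    using al be Vp by (simp add: powr_mult kap_def \<alpha>_def \<beta>_def)
  finally have h: "m powr (1/r - 1/p) * P powr (1 - 1/r) \<le> kap p r * V powr (1 - 1/p)" .
  have "V powr (1/p - 1) * P powr (1 - 1/r) = m powr (1/p - 1/r) * (V powr (1/p - 1) * (m powr (1/r - 1/p) * P powr (1 - 1/r)))"
    using m by (simp add: powr_add[symmetric] mult.assoc)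
  also have "\<dots> \<le> m powr (1/p - 1/r) * (V powr (1/p - 1) * (kap p r * V powr (1 - 1/p)))"
    using h by (intro mult_left_mono) auto
  also have "\<dots> = kap p r * m powr (1/p - 1/r) * (V powr (1/p - 1) * V powr (1 - 1/p))" by (simp add: algebra_simps)
  also have "V powr (1/p - 1) * V powr (1 - 1/p) = 1" using Vp by (simp add: powr_add[symmetric])
  finally show ?thesis unfolding V_def by simp
qed

lemma real_key_A:
  fixes r p a F :: real
  assumes r: "1 < r" and rp: "r < p" and a: "0 < a" and F: "0 < F"
  defines "s \<equiv> (a * bet p r / (alp p r * F)) powr (1/r)"
  shows "s powr r * F = a * bet p r / alp p r"
    and "a + a * bet p r / alp p r = a / alp p r"
    and "(a / alp p r) powr (1/p - 1) * (s powr (r - 1) * F / kap p r) = a powr (1/p - 1/r) * F powr (1/r)"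
proof -
  note ab = alp_bet[OF r rp]
  define \<alpha> where "\<alpha> = alp p r"
  define \<beta> where "\<beta> = bet p r"
  have al: "0 < \<alpha>" and be: "0 < \<beta>" and abs: "\<alpha> + \<beta> = 1" using ab by (auto simp: \<alpha>_def \<beta>_def)
  have ae: "\<alpha> * (1 - 1/p) = 1/r - 1/p" and bee: "\<beta> * (1 - 1/p) = 1 - 1/r" using ab by (auto simp: \<alpha>_def \<beta>_def)
  have q: "a * \<beta> / (\<alpha> * F) > 0" using a F al be by simp
  show "s powr r * F = a * bet p r / alp p r"
    using q r F a al be unfolding s_def \<alpha>_def[symmetric] \<beta>_def[symmetric] by (simp add: powr_powr)
  show "a + a * bet p r / alp p r = a / alp p r"
    using al abs unfolding \<alpha>_def[symmetric] \<beta>_def[symmetric] by (simp add: field_simps) (metis distrib_right mult_1)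
  have s_eq: "s powr (r - 1) = (a * \<beta> / (\<alpha> * F)) powr (1 - 1/r)"
    using q r unfolding s_def \<alpha>_def[symmetric] \<beta>_def[symmetric] by (simp add: powr_powr field_simps)
  have kap_eq: "kap p r = \<alpha> powr (1/r - 1/p) * \<beta> powr (1 - 1/r)"
    using al be unfolding kap_def \<alpha>_def[symmetric] \<beta>_def[symmetric]
    by (simp add: powr_mult powr_powr ae bee)
  have kp: "kap p r > 0" using ab by simp
  have "ln ((a / \<alpha>) powr (1/p - 1) * (s powr (r - 1) * F / kap p r)) = ln (a powr (1/p - 1/r) * F powr (1/r))"
    using a F al be q kp unfolding s_eq kap_eq
    by (simp add: ln_mult ln_div ln_powr algebra_simps)
  then have "(a / \<alpha>) powr (1/p - 1) * (s powr (r - 1) * F / kap p r) = a powr (1/p - 1/r) * F powr (1/r)"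
    using a F al be q kp by (subst (asm) ln_inj_iff) (auto simp: s_eq)
  then show "(a / alp p r) powr (1/p - 1) * (s powr (r - 1) * F / kap p r) = a powr (1/p - 1/r) * F powr (1/r)"
    unfolding \<alpha>_def[symmetric] by simp
qed



lemma holder_nn:
  fixes x y :: "'a \<Rightarrow> real"
  assumes xm: "x \<in> borel_measurable M" and ym: "y \<in> borel_measurable M"
    and x0: "\<And>z. 0 \<le> x z" and y0: "\<And>z. 0 \<le> y z"
    and r: "1 < r" and q: "1 < q" and rq: "1/r + 1/q = 1"
    and X: "(\<integral>\<^sup>+ z. ennreal (x z powr r) \<partial>M) = ennreal X" and X0: "0 \<le> X"
    and Y: "(\<integral>\<^sup>+ z. ennreal (y z powr q) \<partial>M) = ennreal Y" and Y0: "0 \<le> Y"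
  shows "(\<integral>\<^sup>+ z. ennreal (x z * y z) \<partial>M) \<le> ennreal (X powr (1/r) * Y powr (1/q))"
proof (cases "X = 0 \<or> Y = 0")
  case True
  have "AE z in M. x z * y z = 0"
  proof (cases "X = 0")
    case True
    have "AE z in M. ennreal (x z powr r) = 0"
      using X True by (subst nn_integral_0_iff_AE[symmetric]) (auto intro!: measurable_compose[OF xm])
    then show ?thesis by eventually_elim (use x0 in auto)
  next
    case False
    with True have "Y = 0" by simp
    have "AE z in M. ennreal (y z powr q) = 0"
      using Y \<open>Y = 0\<close> by (subst nn_integral_0_iff_AE[symmetric]) (auto intro!: measurable_compose[OF ym])
    then show ?thesis by eventually_elim (use y0 in auto)
  qed
  then have "(\<integral>\<^sup>+ z. ennreal (x z * y z) \<partial>M) = (\<integral>\<^sup>+ z. 0 \<partial>M)"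
    by (intro nn_integral_cong_AE) auto
  then show ?thesis by simp
next
  case False
  then have Xp: "X > 0" and Yp: "Y > 0" using X0 Y0 by auto
  define a where "a = X powr (1/r)"
  define b where "b = Y powr (1/q)"
  have ap: "a > 0" and bp: "b > 0" using Xp Yp by (auto simp: a_def b_def)
  have ar: "a powr r = X" using Xp r by (simp add: a_def powr_powr)
  have bq: "b powr q = Y" using Yp q by (simp add: b_def powr_powr)
  have pt: "x z * y z \<le> (a*b/(r*X)) * x z powr r + (a*b/(q*Y)) * y z powr q" for z
  proof -
    have "(x z / a) * (y z / b) \<le> (x z / a) powr r / r + (y z / b) powr q / q"
      by (rule Youngs_inequality[OF r q rq]) (use x0 y0 ap bp in auto)
    also have "\<dots> = x z powr r / (r * X) + y z powr q / (q * Y)"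
      using ap bp x0 y0 by (simp add: powr_divide ar bq mult.commute)
    finally have "(x z / a) * (y z / b) \<le> x z powr r / (r * X) + y z powr q / (q * Y)" .
    then have "a*b*((x z / a) * (y z / b)) \<le> a*b*(x z powr r / (r * X) + y z powr q / (q * Y))"
      using ap bp by (intro mult_left_mono) auto
    then show ?thesis using ap bp by (simp add: field_simps)
  qed
  have "(\<integral>\<^sup>+ z. ennreal (x z * y z) \<partial>M) \<le>
     (\<integral>\<^sup>+ z. ennreal (a*b/(r*X)) * ennreal (x z powr r) + ennreal (a*b/(q*Y)) * ennreal (y z powr q) \<partial>M)"
    apply (intro nn_integral_mono)
    using pt ap bp Xp Yp r q
    by (simp add: ennreal_mult''[symmetric] ennreal_plus[symmetric] del: ennreal_plus)
  also have "\<dots> = ennreal (a*b/(r*X)) * ennreal X + ennreal (a*b/(q*Y)) * ennreal Y"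
    using xm ym by (simp add: nn_integral_add nn_integral_cmult X Y)
  also have "\<dots> = ennreal (a*b/(r*X) * X + a*b/(q*Y) * Y)"
    using ap bp Xp Yp r q by (simp add: ennreal_mult''[symmetric] ennreal_plus[symmetric] del: ennreal_plus)
  also have "a*b/(r*X) * X + a*b/(q*Y) * Y = a * b * (1/r + 1/q)"
    using Xp Yp by (simp add: field_simps)
  also have "\<dots> = a * b" using rq by simp
  finally show ?thesis by (simp add: a_def b_def)
qed




definition nu :: "'a measure \<Rightarrow> real \<Rightarrow> ('a \<Rightarrow> real) \<Rightarrow> 'a measure" where
  "nu M r h = density M (\<lambda>x. ennreal (1 + h x powr r))"
definition phi :: "real \<Rightarrow> real \<Rightarrow> ('a \<Rightarrow> real) \<Rightarrow> 'a \<Rightarrow> real" where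
  "phi p r h x = h x powr (r - 1) / (kap p r * (1 + h x powr r))"
definition adm :: "'a measure \<Rightarrow> ('a \<Rightarrow> real) \<Rightarrow> bool" where
  "adm M h \<longleftrightarrow> h \<in> borel_measurable M \<and> (\<forall>x. 0 \<le> h x) \<and> (\<exists>K. \<forall>x. h x \<le> K) \<and>
     (\<exists>A\<in>sets M. emeasure M A < \<infinity> \<and> (\<forall>x\<in>space M. x \<notin> A \<longrightarrow> h x = 0))"

lemma sets_nu[simp]: "sets (nu M r h) = sets M" and space_nu[simp]: "space (nu M r h) = space M"
  by (simp_all add: nu_def)

lemma nu_emeasure:
  assumes [measurable]: "h \<in> borel_measurable M" and B[measurable]: "B \<in> sets M"
  shows "emeasure (nu M r h) B = emeasure M B + (\<integral>\<^sup>+ x. ennreal (h x powr r) * indicator B x \<partial>M)"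
proof -
  have "emeasure (nu M r h) B = (\<integral>\<^sup>+ x. ennreal (1 + h x powr r) * indicator B x \<partial>M)"
    unfolding nu_def by (simp add: emeasure_density)
  also have "\<dots> = (\<integral>\<^sup>+ x. indicator B x + ennreal (h x powr r) * indicator B x \<partial>M)"
    by (intro nn_integral_cong) (auto simp: ennreal_plus indicator_def)
  also have "\<dots> = emeasure M B + (\<integral>\<^sup>+ x. ennreal (h x powr r) * indicator B x \<partial>M)"
    by (simp add: nn_integral_add)
  finally show ?thesis .
qed

lemma Phi_le:
  assumes [measurable]: "h \<in> borel_measurable M" and B[measurable]: "B \<in> sets M"
    and h0: "\<And>x. 0 \<le> h x" and hK: "\<And>x. h x \<le> K" and r: "0 < r"
  shows "(\<integral>\<^sup>+ x. ennreal (h x powr r) * indicator B x \<partial>M) \<le> ennreal (K powr r) * emeasure M B"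
proof -
  have "(\<integral>\<^sup>+ x. ennreal (h x powr r) * indicator B x \<partial>M) \<le> (\<integral>\<^sup>+ x. ennreal (K powr r) * indicator B x \<partial>M)"
    by (intro nn_integral_mono mult_right_mono ennreal_leI powr_mono2) (use h0 hK r in auto)
  also have "\<dots> = ennreal (K powr r) * emeasure M B" by (simp add: nn_integral_cmult_indicator)
  finally show ?thesis .
qed





lemma norm_bound:
  assumes r: "1 < r" and rp: "r < p" and adm: "adm M h" and gm[measurable]: "g \<in> borel_measurable M"
  shows "wLp_norm (nu M r h) p 1 (\<lambda>x. g x * phi p r h x) \<le> wLp_norm M p r g"
proof -
  from adm have hm[measurable]: "h \<in> borel_measurable M" and h0: "\<And>x. 0 \<le> h x"
    and "\<exists>K. \<forall>x. h x \<le> K" unfolding adm_def by auto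
  then obtain K where hK: "\<And>x. h x \<le> K" by auto
  note ab = alp_bet[OF r rp]
  define \<kappa> where "\<kappa> = kap p r"
  have kp: "\<kappa> > 0" using ab by (simp add: \<kappa>_def)
  define q where "q = r / (r - 1)"
  have q1: "1 < q" and rq: "1/r + 1/q = 1" using r by (auto simp: q_def field_simps)
  have iq: "1/q = 1 - 1/r" using rq by simp
  show ?thesis
    unfolding wLp_norm_def[of "nu M r h"]
  proof (rule SUP_least)
    fix B assume BB: "B \<in> {A \<in> sets (nu M r h). 0 < emeasure (nu M r h) A \<and> emeasure (nu M r h) A < \<infinity>}"
    then have B[measurable]: "B \<in> sets (nu M r h)" and nB0: "0 < emeasure (nu M r h) B"
      and nBi: "emeasure (nu M r h) B < \<infinity>" by auto
    have BM[measurable]: "B \<in> sets M" using B by simp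
    define \<Phi> where "\<Phi> = (\<integral>\<^sup>+ x. ennreal (h x powr r) * indicator B x \<partial>M)"
    have nuB: "emeasure (nu M r h) B = emeasure M B + \<Phi>" unfolding \<Phi>_def by (rule nu_emeasure) auto
    have PhiK: "\<Phi> \<le> ennreal (K powr r) * emeasure M B" unfolding \<Phi>_def
      by (rule Phi_le) (use h0 hK r in auto)
    have "emeasure M B \<le> emeasure (nu M r h) B" unfolding nuB by simp
    then have mfin: "emeasure M B < \<infinity>" using nBi by (rule le_less_trans)
    have mpos: "0 < emeasure M B"
    proof (rule ccontr)
      assume "\<not> 0 < emeasure M B"
      then have "emeasure M B = 0" by simp
      then have "\<Phi> = 0" using PhiK by simp
      then show False using nB0 nuB \<open>emeasure M B = 0\<close> by simp
    qed
    define mr where "mr = measure M B"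
    have mr1: "emeasure M B = ennreal mr" unfolding mr_def
      by (rule emeasure_eq_ennreal_measure) (use mfin in simp)
    have mr: "emeasure M B = ennreal mr" "0 < mr" using mr1 mpos by (auto simp: mr1)
    have Phifin: "\<Phi> < \<infinity>" using PhiK mfin
      by (metis ennreal_mult_less_top infinity_ennreal_def le_less_trans mr(1) ennreal_neq_top top.not_eq_extremum)
    define Pr where "Pr = enn2real \<Phi>"
    have Pr: "\<Phi> = ennreal Pr" "0 \<le> Pr" using Phifin by (auto simp: Pr_def)
    have mnu: "measure (nu M r h) B = mr + Pr"
      using nuB mr Pr by (simp add: measure_def ennreal_plus[symmetric] del: ennreal_plus)
    define G where "G = (\<integral>\<^sup>+ x. ennreal (\<bar>g x\<bar> powr r) * indicator B x \<partial>M)"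
    have Badm: "B \<in> {A \<in> sets M. 0 < emeasure M A \<and> emeasure M A < \<infinity>}" using mpos mfin by auto
    have termM: "ennreal (measure M B powr (1 / p - 1 / r)) * enn_rpow G (1 / r) \<le> wLp_norm M p r g"
      unfolding wLp_norm_def G_def by (rule SUP_upper2[OF Badm]) simp
    have intnu: "(\<integral>\<^sup>+ x. ennreal (\<bar>g x * phi p r h x\<bar> powr 1) * indicator B x \<partial>nu M r h)
       = ennreal (1/\<kappa>) * (\<integral>\<^sup>+ x. ennreal ((indicator B x * \<bar>g x\<bar>) * (indicator B x * h x powr (r - 1))) \<partial>M)"
    proof -
      have "(\<integral>\<^sup>+ x. ennreal (\<bar>g x * phi p r h x\<bar> powr 1) * indicator B x \<partial>nu M r h)
         = (\<integral>\<^sup>+ x. ennreal (1 + h x powr r) * (ennreal (\<bar>g x * phi p r h x\<bar> powr 1) * indicator B x) \<partial>M)"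
        unfolding nu_def by (subst nn_integral_density) (auto simp: phi_def)
      also have "\<dots> = (\<integral>\<^sup>+ x. ennreal (1/\<kappa>) * ennreal ((indicator B x * \<bar>g x\<bar>) * (indicator B x * h x powr (r - 1))) \<partial>M)"
      proof (intro nn_integral_cong)
        fix x
        have w: "1 + h x powr r > 0" by (simp add: add_pos_nonneg)
        have "(1 + h x powr r) * (\<bar>g x * phi p r h x\<bar>) = (1/\<kappa>) * (\<bar>g x\<bar> * h x powr (r - 1))"
          using w kp h0[of x] by (simp add: phi_def abs_mult \<kappa>_def[symmetric])
        then show "ennreal (1 + h x powr r) * (ennreal (\<bar>g x * phi p r h x\<bar> powr 1) * indicator B x) =
          ennreal (1/\<kappa>) * ennreal ((indicator B x * \<bar>g x\<bar>) * (indicator B x * h x powr (r - 1)))"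
          using w kp by (auto simp: indicator_def ennreal_mult[symmetric] simp del: ennreal_mult ennreal_plus)
      qed
      also have "\<dots> = ennreal (1/\<kappa>) * (\<integral>\<^sup>+ x. ennreal ((indicator B x * \<bar>g x\<bar>) * (indicator B x * h x powr (r - 1))) \<partial>M)"
        by (rule nn_integral_cmult) simp
      finally show ?thesis .
    qed
    show "ennreal (measure (nu M r h) B powr (1 / p - 1 / 1)) *
          enn_rpow (\<integral>\<^sup>+ x\<in>B. ennreal (\<bar>g x * phi p r h x\<bar> powr 1) \<partial>nu M r h) (1 / 1)
          \<le> wLp_norm M p r g"
    proof (cases "G = \<infinity>")
      case True
      have "ennreal (measure M B powr (1 / p - 1 / r)) * enn_rpow G (1 / r) = \<infinity>"
        using True mr by (simp add: enn_rpow_top mr_def ennreal_mult_top)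
      then have "wLp_norm M p r g = \<infinity>" using termM by (simp add: top_unique)
      then show ?thesis by simp
    next
      case False
      define Gr where "Gr = enn2real G"
      have Gr: "G = ennreal Gr" "0 \<le> Gr" using False by (auto simp: Gr_def less_top)
      have hol: "(\<integral>\<^sup>+ x. ennreal ((indicator B x * \<bar>g x\<bar>) * (indicator B x * h x powr (r - 1))) \<partial>M)
          \<le> ennreal (Gr powr (1/r) * Pr powr (1/q))"
      proof (rule holder_nn[OF _ _ _ _ r q1 rq])
        show "(\<integral>\<^sup>+ z. ennreal ((indicator B z * \<bar>g z\<bar>) powr r) \<partial>M) = ennreal Gr"
          unfolding Gr(1)[symmetric] G_def
          by (intro nn_integral_cong) (use r in \<open>auto simp: indicator_def\<close>)
        show "(\<integral>\<^sup>+ z. ennreal ((indicator B z * h z powr (r - 1)) powr q) \<partial>M) = ennreal Pr"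
          unfolding Pr(1)[symmetric] \<Phi>_def
        proof (intro nn_integral_cong)
          fix z
          have "(h z powr (r - 1)) powr q = h z powr r"
            using r by (simp add: powr_powr q_def)
          then show "ennreal ((indicator B z * h z powr (r - 1)) powr q) = ennreal (h z powr r) * indicator B z"
            using q1 by (auto simp: indicator_def)
        qed
      qed (use h0 Gr Pr in auto)
      have "ennreal (measure (nu M r h) B powr (1 / p - 1 / 1)) *
          enn_rpow (\<integral>\<^sup>+ x\<in>B. ennreal (\<bar>g x * phi p r h x\<bar> powr 1) \<partial>nu M r h) (1 / 1)
          = ennreal ((mr + Pr) powr (1 / p - 1)) * (ennreal (1/\<kappa>) *
             (\<integral>\<^sup>+ x. ennreal ((indicator B x * \<bar>g x\<bar>) * (indicator B x * h x powr (r - 1))) \<partial>M))"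
        using intnu by (simp add: enn_rpow_one mnu)
      also have "\<dots> \<le> ennreal ((mr + Pr) powr (1 / p - 1)) * (ennreal (1/\<kappa>) * ennreal (Gr powr (1/r) * Pr powr (1/q)))"
        by (intro mult_left_mono hol) auto
      also have "\<dots> = ennreal (Gr powr (1/r) * ((mr + Pr) powr (1 / p - 1) * Pr powr (1 - 1/r)) / \<kappa>)"
        using kp by (simp add: ennreal_mult[symmetric] iq del: ennreal_mult)
      also have "\<dots> \<le> ennreal (Gr powr (1/r) * (\<kappa> * mr powr (1/p - 1/r)) / \<kappa>)"
        using real_key[OF r rp mr(2) Pr(2)] kp
        by (intro ennreal_leI divide_right_mono mult_left_mono) (auto simp: \<kappa>_def)
      also have "\<dots> = ennreal (measure M B powr (1 / p - 1 / r)) * enn_rpow G (1 / r)"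
        using kp Gr by (simp add: enn_rpow_ennreal mr_def ennreal_mult[symmetric] del: ennreal_mult)
      also have "\<dots> \<le> wLp_norm M p r g" by (rule termM)
      finally show ?thesis .
    qed
  qed
qed




lemma weak_bound:
  assumes r: "1 < r" and rp: "r < p" and adm: "adm M h" and wg: "weak_Lp M p g"
  shows "weak_Lp (nu M r h) p (\<lambda>x. g x * phi p r h x)"
proof -
  from adm have hm[measurable]: "h \<in> borel_measurable M" and h0: "\<And>x. 0 \<le> h x"
    and "\<exists>K. \<forall>x. h x \<le> K" unfolding adm_def by auto
  then obtain K0 where hK0: "\<And>x. h x \<le> K0" by auto
  define K where "K = max K0 1"
  have hK: "\<And>x. h x \<le> K" and K1: "1 \<le> K" using hK0 by (auto simp: K_def intro: le_max_iff_disj[THEN iffD2])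
  have gm[measurable]: "g \<in> borel_measurable M" using wg by (simp add: weak_Lp_def)
  define S where "S = (SUP t\<in>{0<..}. ennreal t * enn_rpow (emeasure M {x \<in> space M. t < \<bar>g x\<bar>}) (1 / p))"
  have Sfin: "S < \<infinity>" using wg by (simp add: weak_Lp_def S_def)
  note ab = alp_bet[OF r rp]
  define \<kappa> where "\<kappa> = kap p r"
  have kp: "\<kappa> > 0" using ab by (simp add: \<kappa>_def)
  define L where "L = K powr (r - 1) / \<kappa>"
  have Lp: "L > 0" using K1 kp by (simp add: L_def)
  define C where "C = 1 + K powr r"
  have Cp: "C > 0" by (simp add: C_def add_pos_nonneg)
  have p0: "0 < 1/p" using r rp by simp
  have phiL: "phi p r h x \<le> L" for x
  proof -
    have "h x powr (r - 1) \<le> K powr (r - 1)" using h0 hK r by (intro powr_mono2) auto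
    moreover have "\<kappa> \<le> \<kappa> * (1 + h x powr r)" using kp by simp
    ultimately have "h x powr (r - 1) / (\<kappa> * (1 + h x powr r)) \<le> K powr (r - 1) / \<kappa>"
      using kp by (intro frac_le) (auto simp: add_pos_nonneg)
    then show ?thesis by (simp add: phi_def L_def \<kappa>_def)
  qed
  have phi0: "0 \<le> phi p r h x" for x using kp by (simp add: phi_def \<kappa>_def[symmetric] add_pos_nonneg)
  have "(SUP t\<in>{0<..}. ennreal t * enn_rpow (emeasure (nu M r h) {x \<in> space (nu M r h). t < \<bar>g x * phi p r h x\<bar>}) (1 / p))
        \<le> ennreal (L * C powr (1/p)) * S"
  proof (rule SUP_least)
    fix t :: real assume t: "t \<in> {0<..}"
    define D where "D = {x \<in> space M. t / L < \<bar>g x\<bar>}"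
    have D[measurable]: "D \<in> sets M" unfolding D_def by measurable
    have sub: "{x \<in> space (nu M r h). t < \<bar>g x * phi p r h x\<bar>} \<subseteq> D"
    proof
      fix x assume "x \<in> {x \<in> space (nu M r h). t < \<bar>g x * phi p r h x\<bar>}"
      then have x: "x \<in> space M" "t < \<bar>g x\<bar> * phi p r h x" using phi0[of x] by (auto simp: abs_mult)
      have "\<bar>g x\<bar> * phi p r h x \<le> \<bar>g x\<bar> * L" by (intro mult_left_mono phiL) auto
      then have "t < \<bar>g x\<bar> * L" using x by simp
      then show "x \<in> D" using x Lp by (simp add: D_def pos_divide_less_eq)
    qed
    have "emeasure (nu M r h) {x \<in> space (nu M r h). t < \<bar>g x * phi p r h x\<bar>} \<le> emeasure (nu M r h) D"
      by (rule emeasure_mono[OF sub]) simp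
    also have "\<dots> = emeasure M D + (\<integral>\<^sup>+ x. ennreal (h x powr r) * indicator D x \<partial>M)"
      by (rule nu_emeasure) auto
    also have "\<dots> \<le> emeasure M D + ennreal (K powr r) * emeasure M D"
      by (intro add_left_mono Phi_le) (use h0 hK r in auto)
    also have "\<dots> = ennreal C * emeasure M D"
      by (simp add: C_def ennreal_plus distrib_right)
    finally have le: "emeasure (nu M r h) {x \<in> space (nu M r h). t < \<bar>g x * phi p r h x\<bar>} \<le> ennreal C * emeasure M D" .
    have tL: "t / L \<in> {0<..}" using t Lp by simp
    have SD: "ennreal (t / L) * enn_rpow (emeasure M D) (1 / p) \<le> S"
      unfolding S_def D_def by (rule SUP_upper2[OF tL]) simp
    have "ennreal t * enn_rpow (emeasure (nu M r h) {x \<in> space (nu M r h). t < \<bar>g x * phi p r h x\<bar>}) (1 / p)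
        \<le> ennreal t * enn_rpow (ennreal C * emeasure M D) (1 / p)"
      by (intro mult_left_mono enn_rpow_mono le p0) auto
    also have "\<dots> = ennreal (L * C powr (1/p)) * (ennreal (t / L) * enn_rpow (emeasure M D) (1 / p))"
      using Cp Lp t by (simp add: enn_rpow_cmult ennreal_mult[symmetric] mult.assoc[symmetric] del: ennreal_mult) (simp add: mult.commute)
    also have "\<dots> \<le> ennreal (L * C powr (1/p)) * S" by (intro mult_left_mono SD) auto
    finally show "ennreal t * enn_rpow (emeasure (nu M r h) {x \<in> space (nu M r h). t < \<bar>g x * phi p r h x\<bar>}) (1 / p)
        \<le> ennreal (L * C powr (1/p)) * S" .
  qed
  also have "\<dots> < \<infinity>" using Sfin by (simp add: ennreal_mult_less_top less_top)
  finally show ?thesis unfolding weak_Lp_def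
    by (auto simp: phi_def measurable_cong_sets[OF sets_nu refl, of M r h])
qed





lemma adm_int_fin:
  assumes "adm M h" "0 < r" "B \<in> sets M"
  shows "(\<integral>\<^sup>+ x. ennreal (h x powr r) * indicator B x \<partial>M) < \<infinity>"
proof -
  from assms(1) obtain K A where hm[measurable]: "h \<in> borel_measurable M" and h0: "\<And>x. 0 \<le> h x"
    and hK: "\<And>x. h x \<le> K" and A[measurable]: "A \<in> sets M" and Af: "emeasure M A < \<infinity>"
    and hA: "\<And>x. x \<in> space M \<Longrightarrow> x \<notin> A \<Longrightarrow> h x = 0" unfolding adm_def by blast
  have "(\<integral>\<^sup>+ x. ennreal (h x powr r) * indicator B x \<partial>M) \<le> (\<integral>\<^sup>+ x. ennreal (h x powr r) * indicator A x \<partial>M)"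
    by (intro nn_integral_mono) (auto simp: indicator_def hA)
  also have "\<dots> \<le> ennreal (K powr r) * emeasure M A"
    by (rule Phi_le) (use h0 hK assms in auto)
  also have "\<dots> < \<infinity>" using Af by (simp add: ennreal_mult_less_top less_top)
  finally show ?thesis .
qed

lemma uniq_half:
  assumes a1: "adm M h1" and a2: "adm M h2" and r: "0 < r"
    and eq: "\<And>B. B \<in> sets M \<Longrightarrow> (\<integral>\<^sup>+ x. ennreal (h1 x powr r) * indicator B x \<partial>M) = (\<integral>\<^sup>+ x. ennreal (h2 x powr r) * indicator B x \<partial>M)"
  shows "AE x in M. h1 x \<le> h2 x"
proof -
  have [measurable]: "h1 \<in> borel_measurable M" "h2 \<in> borel_measurable M" and h10: "\<And>x. 0 \<le> h1 x"
    and h20: "\<And>x. 0 \<le> h2 x" using a1 a2 unfolding adm_def by auto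
  define D where "D = {x \<in> space M. h2 x < h1 x}"
  have D[measurable]: "D \<in> sets M" unfolding D_def by measurable
  have fin: "(\<integral>\<^sup>+ x. ennreal (h2 x powr r) * indicator D x \<partial>M) < \<infinity>"
    by (rule adm_int_fin[OF a2 r D])
  define X where "X = (\<integral>\<^sup>+ x. ennreal ((h1 x powr r - h2 x powr r) * indicator D x) \<partial>M)"
  define Y where "Y = (\<integral>\<^sup>+ x. ennreal (h2 x powr r) * indicator D x \<partial>M)"
  have "X + Y = (\<integral>\<^sup>+ x. ennreal ((h1 x powr r - h2 x powr r) * indicator D x) + ennreal (h2 x powr r) * indicator D x \<partial>M)"
    unfolding X_def Y_def by (rule nn_integral_add[symmetric]) auto
  also have "\<dots> = (\<integral>\<^sup>+ x. ennreal (h1 x powr r) * indicator D x \<partial>M)"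
  proof (intro nn_integral_cong)
    fix x assume x: "x \<in> space M"
    show "ennreal ((h1 x powr r - h2 x powr r) * indicator D x) + ennreal (h2 x powr r) * indicator D x =
      ennreal (h1 x powr r) * indicator D x"
    proof (cases "x \<in> D")
      case True
      then have "h2 x powr r \<le> h1 x powr r" using h20[of x] r by (intro powr_mono2) (auto simp: D_def)
      then show ?thesis using True by (simp add: ennreal_plus[symmetric] del: ennreal_plus)
    qed simp
  qed
  also have "\<dots> = Y" unfolding Y_def by (rule eq[OF D])
  finally have sumeq: "X + Y = Y" .
  have Yf: "Y \<noteq> top" using fin by (simp add: Y_def less_top)
  have X0: "X = 0" using sumeq Yf by simp
  have Xm: "(\<lambda>x. ennreal ((h1 x powr r - h2 x powr r) * indicator D x)) \<in> borel_measurable M" by measurable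
  have "AE x in M. ennreal ((h1 x powr r - h2 x powr r) * indicator D x) = 0"
    using X0 nn_integral_0_iff_AE[OF Xm] by (simp add: X_def)
  moreover have "AE x in M. x \<in> space M" by simp
  ultimately show ?thesis
  proof eventually_elim
    case (elim x)
    show ?case
    proof (rule ccontr)
      assume "\<not> h1 x \<le> h2 x"
      then have "x \<in> D \<or> x \<notin> space M" by (auto simp: D_def)
      with elim(2) have xD: "x \<in> D" by simp
      then have "h2 x powr r < h1 x powr r" using h20[of x] r by (intro powr_less_mono2) (auto simp: D_def)
      then show False using elim(1) xD by auto
    qed
  qed
qed




lemma AE_nu: "h \<in> borel_measurable M \<Longrightarrow> (AE x in M. P x) \<Longrightarrow> (AE x in nu M r h. P x)"
  unfolding nu_def by (subst AE_density) (auto elim: AE_mp)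

lemma uniq:
  assumes a1: "adm M h1" and a2: "adm M h2" and r: "0 < r" and eqn: "nu M r h1 = nu M r h2"
  shows "AE x in M. h1 x = h2 x"
proof -
  obtain A1 where [measurable]: "A1 \<in> sets M" and A1f: "emeasure M A1 < \<infinity>"
    and hA1: "\<And>x. x \<in> space M \<Longrightarrow> x \<notin> A1 \<Longrightarrow> h1 x = 0" using a1 unfolding adm_def by blast
  obtain A2 where [measurable]: "A2 \<in> sets M" and A2f: "emeasure M A2 < \<infinity>"
    and hA2: "\<And>x. x \<in> space M \<Longrightarrow> x \<notin> A2 \<Longrightarrow> h2 x = 0" using a2 unfolding adm_def by blast
  have [measurable]: "h1 \<in> borel_measurable M" "h2 \<in> borel_measurable M" using a1 a2 unfolding adm_def by auto
  define E where "E = A1 \<union> A2"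
  have E[measurable]: "E \<in> sets M" by (simp add: E_def)
  have Ef: "emeasure M E < \<infinity>"
    using emeasure_subadditive[of A1 M A2] A1f A2f by (simp add: E_def) (metis ennreal_add_less_top le_less_trans)
  have eq: "(\<integral>\<^sup>+ x. ennreal (h1 x powr r) * indicator B x \<partial>M) = (\<integral>\<^sup>+ x. ennreal (h2 x powr r) * indicator B x \<partial>M)"
    if B[measurable]: "B \<in> sets M" for B
  proof -
    have BE[measurable]: "B \<inter> E \<in> sets M" by simp
    have mf: "emeasure M (B \<inter> E) \<noteq> \<infinity>"
      using emeasure_mono[of "B \<inter> E" E M] Ef by (auto simp: top_unique)
    have red: "(\<integral>\<^sup>+ x. ennreal (h x powr r) * indicator (B \<inter> E) x \<partial>M) = (\<integral>\<^sup>+ x. ennreal (h x powr r) * indicator B x \<partial>M)"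
      if "\<And>x. x \<in> space M \<Longrightarrow> x \<notin> E \<Longrightarrow> h x = 0" for h
      by (intro nn_integral_cong) (use that in \<open>auto simp: indicator_def\<close>)
    have "emeasure (nu M r h1) (B \<inter> E) = emeasure (nu M r h2) (B \<inter> E)" using eqn by simp
    then have "emeasure M (B \<inter> E) + (\<integral>\<^sup>+ x. ennreal (h1 x powr r) * indicator (B \<inter> E) x \<partial>M)
        = emeasure M (B \<inter> E) + (\<integral>\<^sup>+ x. ennreal (h2 x powr r) * indicator (B \<inter> E) x \<partial>M)"
      by (simp add: nu_emeasure)
    then have "(\<integral>\<^sup>+ x. ennreal (h1 x powr r) * indicator (B \<inter> E) x \<partial>M)
        = (\<integral>\<^sup>+ x. ennreal (h2 x powr r) * indicator (B \<inter> E) x \<partial>M)"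
      using mf by (simp add: ennreal_add_left_cancel)
    then show ?thesis using red[of h1] red[of h2] hA1 hA2 by (simp add: E_def)
  qed
  have "AE x in M. h1 x \<le> h2 x" by (rule uniq_half[OF a1 a2 r eq])
  moreover have "AE x in M. h2 x \<le> h1 x" by (rule uniq_half[OF a2 a1 r eq[symmetric]])
  ultimately show ?thesis by eventually_elim simp
qed




lemma powr_mul_self: "0 \<le> (x::real) \<Longrightarrow> 0 < e \<Longrightarrow> x * x powr e = x powr (e + 1)"
  by (cases "x = 0") (auto simp: powr_add)

lemma lower_adm:
  assumes r: "1 < r" and rp: "r < p" and fm[measurable]: "f \<in> borel_measurable M"
    and A[measurable]: "A \<in> sets M" and Ap: "0 < emeasure M A" and Af: "emeasure M A < \<infinity>"
    and n: "1 \<le> n"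
    and F: "(\<integral>\<^sup>+ x. ennreal ((indicator A x * min \<bar>f x\<bar> n) powr r) \<partial>M) = ennreal Fr" and Fp: "0 < Fr"
  defines "s \<equiv> (measure M A * bet p r / (alp p r * Fr)) powr (1/r)"
  shows "adm M (\<lambda>x. s * (indicator A x * min \<bar>f x\<bar> n))"
proof -
  define f0 where "f0 = (\<lambda>x. indicator A x * min \<bar>f x\<bar> n)"
  define h where "h = (\<lambda>x. s * f0 x)"
  have f0m[measurable]: "f0 \<in> borel_measurable M" unfolding f0_def by measurable
  have f00: "0 \<le> f0 x" for x using n by (auto simp: f0_def indicator_def)
  have f0n: "f0 x \<le> n" for x using n by (auto simp: f0_def indicator_def)
  have f0A: "x \<notin> A \<Longrightarrow> f0 x = 0" for x by (simp add: f0_def)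
  have f0f: "f0 x \<le> indicator A x * \<bar>f x\<bar>" for x by (auto simp: f0_def indicator_def)
  have Ff0: "(\<integral>\<^sup>+ x. ennreal (f0 x powr r) \<partial>M) = ennreal Fr" using F by (simp add: f0_def)
  note ab = alp_bet[OF r rp]
  define a where "a = measure M A"
  have aA: "emeasure M A = ennreal a" unfolding a_def
    by (rule emeasure_eq_ennreal_measure) (use Af in simp)
  have ap: "0 < a" using aA Ap by simp
  have s0: "0 < s" unfolding s_def a_def[symmetric] using ap Fp ab by simp
  have s_eq': "s = (a * bet p r / (alp p r * Fr)) powr (1/r)" by (simp add: s_def a_def)
  note RA = real_key_A[OF r rp ap Fp, folded s_eq']
  have hm[measurable]: "h \<in> borel_measurable M" unfolding h_def by measurable
  have h0: "0 \<le> h x" for x using s0 f00 by (simp add: h_def)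
  have admh0: "adm M h"
    unfolding adm_def
  proof (intro conjI)
    show "\<exists>K. \<forall>x. h x \<le> K" using f0n s0 by (intro exI[of _ "s * n"]) (auto simp: h_def)
    show "\<exists>A\<in>sets M. emeasure M A < \<infinity> \<and> (\<forall>x\<in>space M. x \<notin> A \<longrightarrow> h x = 0)"
      using A Af f0A by (auto simp: h_def)
  qed (use h0 in auto)
  then show "adm M (\<lambda>x. s * (indicator A x * min \<bar>f x\<bar> n))" by (simp add: h_def f0_def)
qed

lemma lower:
  assumes r: "1 < r" and rp: "r < p" and fm[measurable]: "f \<in> borel_measurable M"
    and A[measurable]: "A \<in> sets M" and Ap: "0 < emeasure M A" and Af: "emeasure M A < \<infinity>"
    and n: "1 \<le> n"
    and F: "(\<integral>\<^sup>+ x. ennreal ((indicator A x * min \<bar>f x\<bar> n) powr r) \<partial>M) = ennreal Fr" and Fp: "0 < Fr"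
  defines "s \<equiv> (measure M A * bet p r / (alp p r * Fr)) powr (1/r)"
  assumes adm': "adm M h'" and eqn: "nu M r h' = nu M r (\<lambda>x. s * (indicator A x * min \<bar>f x\<bar> n))"
  shows "ennreal (measure M A powr (1/p - 1/r) * Fr powr (1/r)) \<le> wLp_norm (nu M r h') p 1 (\<lambda>x. f x * phi p r h' x)"
proof -
  define f0 where "f0 = (\<lambda>x. indicator A x * min \<bar>f x\<bar> n)"
  define h where "h = (\<lambda>x. s * f0 x)"
  have f0m[measurable]: "f0 \<in> borel_measurable M" unfolding f0_def by measurable
  have f00: "0 \<le> f0 x" for x using n by (auto simp: f0_def indicator_def)
  have f0n: "f0 x \<le> n" for x using n by (auto simp: f0_def indicator_def)
  have f0A: "x \<notin> A \<Longrightarrow> f0 x = 0" for x by (simp add: f0_def)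
  have f0f: "f0 x \<le> indicator A x * \<bar>f x\<bar>" for x by (auto simp: f0_def indicator_def)
  have Ff0: "(\<integral>\<^sup>+ x. ennreal (f0 x powr r) \<partial>M) = ennreal Fr" using F by (simp add: f0_def)
  note ab = alp_bet[OF r rp]
  define a where "a = measure M A"
  have aA: "emeasure M A = ennreal a" unfolding a_def
    by (rule emeasure_eq_ennreal_measure) (use Af in simp)
  have ap: "0 < a" using aA Ap by simp
  have s0: "0 < s" unfolding s_def a_def[symmetric] using ap Fp ab by simp
  have s_eq': "s = (a * bet p r / (alp p r * Fr)) powr (1/r)" by (simp add: s_def a_def)
  note RA = real_key_A[OF r rp ap Fp, folded s_eq']
  have hm[measurable]: "h \<in> borel_measurable M" unfolding h_def by measurable
  have h0: "0 \<le> h x" for x using s0 f00 by (simp add: h_def)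
  have admh0: "adm M h"
    unfolding adm_def
  proof (intro conjI)
    show "\<exists>K. \<forall>x. h x \<le> K" using f0n s0 by (intro exI[of _ "s * n"]) (auto simp: h_def)
    show "\<exists>A\<in>sets M. emeasure M A < \<infinity> \<and> (\<forall>x\<in>space M. x \<notin> A \<longrightarrow> h x = 0)"
      using A Af f0A by (auto simp: h_def)
  qed (use h0 in auto)
  have eqn': "nu M r h' = nu M r h" using eqn by (simp add: h_def f0_def)
  note admh' = admh0
  have ae: "AE x in M. h' x = h x" by (rule uniq[OF adm' admh' _ eqn']) (use r in simp)
  have h'm[measurable]: "h' \<in> borel_measurable M" using adm' by (simp add: adm_def)
  define \<kappa> where "\<kappa> = kap p r"
  have kp: "\<kappa> > 0" using ab by (simp add: \<kappa>_def)
  have hr: "h x powr r = s powr r * f0 x powr r" for x using s0 f00 by (simp add: h_def powr_mult)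
  have H: "(\<integral>\<^sup>+ x. ennreal (h x powr r) * indicator A x \<partial>M) = ennreal (a * bet p r / alp p r)"
  proof -
    have "(\<integral>\<^sup>+ x. ennreal (h x powr r) * indicator A x \<partial>M) = (\<integral>\<^sup>+ x. ennreal (s powr r) * ennreal (f0 x powr r) \<partial>M)"
      by (intro nn_integral_cong) (auto simp: hr f0A indicator_def ennreal_mult[symmetric] simp del: ennreal_mult)
    also have "\<dots> = ennreal (s powr r) * ennreal Fr"
      by (subst nn_integral_cmult) (auto simp: Ff0)
    also have "\<dots> = ennreal (a * bet p r / alp p r)"
      using RA(1) Fp by (simp add: ennreal_mult[symmetric] del: ennreal_mult)
    finally show ?thesis .
  qed
  have nuA: "emeasure (nu M r h) A = ennreal (a / alp p r)"
  proof -
    have "emeasure (nu M r h) A = ennreal a + ennreal (a * bet p r / alp p r)"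
      using nu_emeasure[OF hm A, of r] H aA by simp
    also have "\<dots> = ennreal (a + a * bet p r / alp p r)"
      using ab ap by (intro ennreal_plus[symmetric]) auto
    also have "a + a * bet p r / alp p r = a / alp p r" by (rule RA(2))
    finally show ?thesis .
  qed
  have alpos: "0 < a / alp p r" using ab ap by simp
  have mnuA: "measure (nu M r h) A = a / alp p r" using nuA alpos by (simp add: measure_def)
  have mnuA': "measure (nu M r h') A = a / alp p r" using mnuA eqn' by simp
  have Aadm: "A \<in> {B \<in> sets (nu M r h'). 0 < emeasure (nu M r h') B \<and> emeasure (nu M r h') B < \<infinity>}"
    unfolding eqn' using nuA alpos A by simp
  have aeM: "AE x in M. phi p r h' x = phi p r h x" using ae by eventually_elim (simp add: phi_def)
  have aenu: "AE x in nu M r h. ennreal (\<bar>f x * phi p r h' x\<bar> powr 1) * indicator A x = ennreal (\<bar>f x * phi p r h x\<bar>) * indicator A x"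
    using AE_nu[OF hm aeM] by eventually_elim simp
  have "(\<integral>\<^sup>+ x\<in>A. ennreal (\<bar>f x * phi p r h' x\<bar> powr 1) \<partial>nu M r h')
      = (\<integral>\<^sup>+ x. ennreal (\<bar>f x * phi p r h x\<bar>) * indicator A x \<partial>nu M r h)"
    unfolding eqn' by (rule nn_integral_cong_AE[OF aenu])
  also have "\<dots> = (\<integral>\<^sup>+ x. ennreal (1 + h x powr r) * (ennreal (\<bar>f x * phi p r h x\<bar>) * indicator A x) \<partial>M)"
    unfolding nu_def by (subst nn_integral_density) (auto simp: phi_def)
  also have "\<dots> \<ge> (\<integral>\<^sup>+ x. ennreal (1/\<kappa> * s powr (r - 1)) * ennreal (f0 x powr r) \<partial>M)"
  proof (intro nn_integral_mono)
    fix x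
    have w: "1 + h x powr r > 0" by (simp add: add_pos_nonneg)
    have e1: "(1 + h x powr r) * (\<bar>f x * phi p r h x\<bar> * indicator A x) = 1/\<kappa> * ((indicator A x * \<bar>f x\<bar>) * h x powr (r - 1))"
      using w kp h0[of x] by (simp add: phi_def abs_mult \<kappa>_def[symmetric] indicator_def)
    have "f0 x * h x powr (r - 1) \<le> (indicator A x * \<bar>f x\<bar>) * h x powr (r - 1)"
      by (intro mult_right_mono f0f) auto
    moreover have "f0 x * h x powr (r - 1) = s powr (r - 1) * f0 x powr r"
    proof -
      have ff: "f0 x * f0 x powr (r - 1) = f0 x powr r" using powr_mul_self[of "f0 x" "r - 1"] f00[of x] r by simp
      have "f0 x * h x powr (r - 1) = s powr (r - 1) * (f0 x * f0 x powr (r - 1))"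
        using s0 f00[of x] by (simp add: h_def powr_mult)
      then show ?thesis using ff by simp
    qed
    ultimately have "s powr (r - 1) * f0 x powr r \<le> (indicator A x * \<bar>f x\<bar>) * h x powr (r - 1)"
      by simp
    then have ineq: "1/\<kappa> * s powr (r - 1) * f0 x powr r \<le> 1/\<kappa> * ((indicator A x * \<bar>f x\<bar>) * h x powr (r - 1))"
      using kp by (simp only: mult.assoc) (rule mult_left_mono, auto)
    then show "ennreal (1/\<kappa> * s powr (r - 1)) * ennreal (f0 x powr r)
      \<le> ennreal (1 + h x powr r) * (ennreal (\<bar>f x * phi p r h x\<bar>) * indicator A x)"
    proof -
      have L: "ennreal (1/\<kappa> * s powr (r - 1)) * ennreal (f0 x powr r) = ennreal (1/\<kappa> * s powr (r - 1) * f0 x powr r)"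
        using kp by (subst ennreal_mult[symmetric]) auto
      have R: "ennreal (1 + h x powr r) * (ennreal (\<bar>f x * phi p r h x\<bar>) * indicator A x)
         = ennreal ((1 + h x powr r) * (\<bar>f x * phi p r h x\<bar> * indicator A x))"
        using w by (simp add: ennreal_mult'' ennreal_indicator[symmetric] del: ennreal_plus)
      show ?thesis unfolding L R e1 by (rule ennreal_leI) (rule ineq)
    qed
  qed
  also have "(\<integral>\<^sup>+ x. ennreal (1/\<kappa> * s powr (r - 1)) * ennreal (f0 x powr r) \<partial>M) = ennreal (s powr (r - 1) * Fr / \<kappa>)"
    using kp Fp by (subst nn_integral_cmult) (auto simp: Ff0 ennreal_mult[symmetric] simp del: ennreal_mult)
  finally have Ibig: "ennreal (s powr (r - 1) * Fr / \<kappa>) \<le> (\<integral>\<^sup>+ x\<in>A. ennreal (\<bar>f x * phi p r h' x\<bar> powr 1) \<partial>nu M r h')" .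
  have "ennreal (measure M A powr (1/p - 1/r) * Fr powr (1/r))
      = ennreal ((a / alp p r) powr (1/p - 1)) * ennreal (s powr (r - 1) * Fr / \<kappa>)"
  proof -
    have "measure M A powr (1/p - 1/r) * Fr powr (1/r) = (a / alp p r) powr (1/p - 1) * (s powr (r - 1) * Fr / \<kappa>)"
      using RA(3) by (simp add: a_def \<kappa>_def)
    moreover have "ennreal ((a / alp p r) powr (1/p - 1) * (s powr (r - 1) * Fr / \<kappa>))
       = ennreal ((a / alp p r) powr (1/p - 1)) * ennreal (s powr (r - 1) * Fr / \<kappa>)"
      by (rule ennreal_mult) (use kp Fp in auto)
    ultimately show ?thesis by simp
  qed
  also have "\<dots> \<le> ennreal (measure (nu M r h') A powr (1/p - 1)) * enn_rpow (\<integral>\<^sup>+ x\<in>A. ennreal (\<bar>f x * phi p r h' x\<bar> powr 1) \<partial>nu M r h') 1"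
    unfolding enn_rpow_one mnuA' by (intro mult_left_mono Ibig) auto
  also have "\<dots> \<le> wLp_norm (nu M r h') p 1 (\<lambda>x. f x * phi p r h' x)"
    unfolding wLp_norm_def by (rule SUP_upper2[OF Aadm]) simp
  finally show "ennreal (measure M A powr (1/p - 1/r) * Fr powr (1/r)) \<le> wLp_norm (nu M r h') p 1 (\<lambda>x. f x * phi p r h' x)" .
qed




lemma phi_nonneg: "1 < r \<Longrightarrow> r < p \<Longrightarrow> 0 \<le> phi p r h x"
  using alp_bet(6)[of r p] by (simp add: phi_def add_pos_nonneg)

lemma powr_inv_le:
  fixes x y r :: real
  assumes "0 \<le> x" "0 \<le> y" "0 < r" "x powr (1/r) \<le> y"
  shows "x \<le> y powr r"
proof -
  have "(x powr (1/r)) powr r \<le> y powr r" using assms by (intro powr_mono2) auto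
  then show ?thesis using assms by (simp add: powr_powr)
qed

theorem mainTheorem13:
  fixes M :: "'a measure" and p r :: real
  assumes "1 < r" and "r < p"
  shows "\<exists>(\<Gamma> :: 'a measure set) (T :: ('a \<Rightarrow> real) \<Rightarrow> 'a measure \<Rightarrow> 'a \<Rightarrow> real).
    (\<forall>\<nu>\<in>\<Gamma>. sets \<nu> = sets M) \<and>
    (\<forall>f. weak_Lp M p f \<longrightarrow> (\<forall>\<nu>\<in>\<Gamma>. weak_Lp \<nu> p (T f \<nu>))) \<and>
    (\<forall>f g. weak_Lp M p f \<longrightarrow> weak_Lp M p g \<longrightarrow> (AE x in M. f x = g x) \<longrightarrow>
        (\<forall>\<nu>\<in>\<Gamma>. AE x in \<nu>. T f \<nu> x = T g \<nu> x)) \<and>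
    (\<forall>f g a b. weak_Lp M p f \<longrightarrow> weak_Lp M p g \<longrightarrow>
        (\<forall>\<nu>\<in>\<Gamma>. AE x in \<nu>. T (\<lambda>y. a * f y + b * g y) \<nu> x = a * T f \<nu> x + b * T g \<nu> x)) \<and>
    (\<forall>f. weak_Lp M p f \<longrightarrow>
        (\<forall>\<nu>\<in>\<Gamma>. AE x in \<nu>. T (\<lambda>y. \<bar>f y\<bar>) \<nu> x = \<bar>T f \<nu> x\<bar>)) \<and>
    (\<forall>f. weak_Lp M p f \<longrightarrow>
        wLp_norm M p r f = (SUP \<nu>\<in>\<Gamma>. wLp_norm \<nu> p 1 (T f \<nu>)))"
proof -
  note r = assms(1) and rp = assms(2)
  define \<Gamma> where "\<Gamma> = {nu M r h | h. adm M h}"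
  define H where "H = (\<lambda>\<nu>. SOME h. adm M h \<and> \<nu> = nu M r h)"
  define T where "T = (\<lambda>(f :: 'a \<Rightarrow> real) \<nu> x. f x * phi p r (H \<nu>) x)"
  have HG: "adm M (H \<nu>) \<and> \<nu> = nu M r (H \<nu>)" if "\<nu> \<in> \<Gamma>" for \<nu>
  proof -
    from that obtain h where "adm M h" "\<nu> = nu M r h" by (auto simp: \<Gamma>_def)
    then show ?thesis unfolding H_def by (intro someI[of "\<lambda>h. adm M h \<and> \<nu> = nu M r h"]) auto
  qed
  have Tf: "T f \<nu> = (\<lambda>x. f x * phi p r (H \<nu>) x)" for f \<nu> by (simp add: T_def)
  have P1: "\<forall>\<nu>\<in>\<Gamma>. sets \<nu> = sets M" by (auto simp: \<Gamma>_def)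
  have P2: "\<forall>f. weak_Lp M p f \<longrightarrow> (\<forall>\<nu>\<in>\<Gamma>. weak_Lp \<nu> p (T f \<nu>))"
  proof (intro allI impI ballI)
    fix f \<nu> assume f: "weak_Lp M p f" and \<nu>: "\<nu> \<in> \<Gamma>"
    have "weak_Lp (nu M r (H \<nu>)) p (\<lambda>x. f x * phi p r (H \<nu>) x)"
      by (rule weak_bound[OF r rp _ f]) (use HG[OF \<nu>] in auto)
    then show "weak_Lp \<nu> p (T f \<nu>)" using HG[OF \<nu>] by (simp add: Tf)
  qed
  have P3: "\<forall>f g. weak_Lp M p f \<longrightarrow> weak_Lp M p g \<longrightarrow> (AE x in M. f x = g x) \<longrightarrow>
        (\<forall>\<nu>\<in>\<Gamma>. AE x in \<nu>. T f \<nu> x = T g \<nu> x)"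
  proof (intro allI impI ballI)
    fix f g :: "'a \<Rightarrow> real" and \<nu> assume ae: "AE x in M. f x = g x" and \<nu>: "\<nu> \<in> \<Gamma>"
    obtain h where ha: "adm M h" and he: "\<nu> = nu M r h" and hH: "H \<nu> = h" using HG[OF \<nu>] by blast
    have hm: "h \<in> borel_measurable M" using ha by (simp add: adm_def)
    have "AE x in nu M r h. f x = g x" by (rule AE_nu[OF hm ae])
    then have "AE x in \<nu>. f x = g x" unfolding he .
    then show "AE x in \<nu>. T f \<nu> x = T g \<nu> x" by eventually_elim (simp add: Tf)
  qed
  have P4: "\<forall>f g a b. weak_Lp M p f \<longrightarrow> weak_Lp M p g \<longrightarrow>
        (\<forall>\<nu>\<in>\<Gamma>. AE x in \<nu>. T (\<lambda>y. a * f y + b * g y) \<nu> x = a * T f \<nu> x + b * T g \<nu> x)"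
    by (intro allI impI ballI AE_I2) (simp add: Tf algebra_simps)
  have P5: "\<forall>f. weak_Lp M p f \<longrightarrow>
        (\<forall>\<nu>\<in>\<Gamma>. AE x in \<nu>. T (\<lambda>y. \<bar>f y\<bar>) \<nu> x = \<bar>T f \<nu> x\<bar>)"
    by (intro allI impI ballI AE_I2) (simp add: Tf abs_mult phi_nonneg[OF r rp])
  have P6: "wLp_norm M p r f = (SUP \<nu>\<in>\<Gamma>. wLp_norm \<nu> p 1 (T f \<nu>))" if wf: "weak_Lp M p f" for f
  proof (rule antisym)
    have fm[measurable]: "f \<in> borel_measurable M" using wf by (simp add: weak_Lp_def)
    define S where "S = (SUP \<nu>\<in>\<Gamma>. wLp_norm \<nu> p 1 (T f \<nu>))"
    show "(SUP \<nu>\<in>\<Gamma>. wLp_norm \<nu> p 1 (T f \<nu>)) \<le> wLp_norm M p r f"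
    proof (rule SUP_least)
      fix \<nu> assume \<nu>: "\<nu> \<in> \<Gamma>"
      have "wLp_norm (nu M r (H \<nu>)) p 1 (\<lambda>x. f x * phi p r (H \<nu>) x) \<le> wLp_norm M p r f"
        by (rule norm_bound[OF r rp _ fm]) (use HG[OF \<nu>] in auto)
      then show "wLp_norm \<nu> p 1 (T f \<nu>) \<le> wLp_norm M p r f" using HG[OF \<nu>] by (simp add: Tf)
    qed
    show "wLp_norm M p r f \<le> (SUP \<nu>\<in>\<Gamma>. wLp_norm \<nu> p 1 (T f \<nu>))"
      unfolding S_def[symmetric] wLp_norm_def[of M p r f]
    proof (rule SUP_least)
      fix A assume AA: "A \<in> {A \<in> sets M. 0 < emeasure M A \<and> emeasure M A < \<infinity>}"
      then have A[measurable]: "A \<in> sets M" and Ap: "0 < emeasure M A" and Af: "emeasure M A < \<infinity>" by auto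
      define a where "a = measure M A"
      have aA: "emeasure M A = ennreal a" unfolding a_def
        by (rule emeasure_eq_ennreal_measure) (use Af in simp)
      have ap: "0 < a" using aA Ap by simp
      define c where "c = a powr (1/p - 1/r)"
      have cp: "0 < c" using ap by (simp add: c_def)
      define Fk where "Fk = (\<lambda>k::nat. (\<integral>\<^sup>+ x. ennreal ((indicator A x * min \<bar>f x\<bar> (real k + 1)) powr r) \<partial>M))"
      have Fk_fin: "Fk k < \<infinity>" for k
      proof -
        have "Fk k \<le> (\<integral>\<^sup>+ x. ennreal ((real k + 1) powr r) * indicator A x \<partial>M)"
          unfolding Fk_def
          by (intro nn_integral_mono) (use r in \<open>auto simp: indicator_def intro!: ennreal_leI powr_mono2\<close>)
        also have "\<dots> = ennreal ((real k + 1) powr r) * emeasure M A" by (simp add: nn_integral_cmult_indicator)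
        also have "\<dots> < \<infinity>" using Af by (simp add: ennreal_mult_less_top less_top)
        finally show ?thesis .
      qed
      define Fr where "Fr = (\<lambda>k. enn2real (Fk k))"
      have Fr: "Fk k = ennreal (Fr k)" "0 \<le> Fr k" for k using Fk_fin[of k] by (auto simp: Fr_def less_top)
      have boundk: "ennreal (c * Fr k powr (1/r)) \<le> S" for k
      proof (cases "Fr k = 0")
        case True then show ?thesis using r by simp
      next
        case False
        then have Fp: "0 < Fr k" using Fr(2)[of k] by simp
        define s where "s = (measure M A * bet p r / (alp p r * Fr k)) powr (1/r)"
        define h where "h = (\<lambda>x. s * (indicator A x * min \<bar>f x\<bar> (real k + 1)))"
        have FF: "(\<integral>\<^sup>+ x. ennreal ((indicator A x * min \<bar>f x\<bar> (real k + 1)) powr r) \<partial>M) = ennreal (Fr k)"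
          using Fr(1)[of k] by (simp add: Fk_def)
        have admh: "adm M h" unfolding h_def s_def
          by (rule lower_adm[OF r rp fm A Ap Af _ FF Fp]) simp
        have \<nu>: "nu M r h \<in> \<Gamma>" using admh by (auto simp: \<Gamma>_def)
        have "ennreal (measure M A powr (1/p - 1/r) * Fr k powr (1/r))
           \<le> wLp_norm (nu M r (H (nu M r h))) p 1 (\<lambda>x. f x * phi p r (H (nu M r h)) x)"
          using HG[OF \<nu>] unfolding h_def s_def
          by (intro lower[OF r rp fm A Ap Af _ FF Fp]) auto
        also have "\<dots> = wLp_norm (nu M r h) p 1 (T f (nu M r h))"
          using HG[OF \<nu>] by (simp add: Tf)
        also have "\<dots> \<le> S" unfolding S_def by (rule SUP_upper[OF \<nu>])
        finally show ?thesis by (simp add: c_def a_def)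
      qed
      show "ennreal (measure M A powr (1 / p - 1 / r)) * enn_rpow (\<integral>\<^sup>+ x\<in>A. ennreal (\<bar>f x\<bar> powr r) \<partial>M) (1 / r) \<le> S"
      proof (cases "S = \<infinity>")
        case True then show ?thesis by simp
      next
        case False
        define Sr where "Sr = enn2real S"
        have Sr: "S = ennreal Sr" "0 \<le> Sr" using False by (auto simp: Sr_def less_top)
        define Bd where "Bd = (Sr / c) powr r"
        have FkB: "Fk k \<le> ennreal Bd" for k
        proof -
          have "c * Fr k powr (1/r) \<le> Sr" using boundk[of k] Sr cp by (auto simp: ennreal_le_iff2 ennreal_le_iff)
          then have fk: "Fr k powr (1/r) \<le> Sr / c" using cp by (simp add: field_simps)
          have "Fr k \<le> Bd" unfolding Bd_def
            by (rule powr_inv_le[OF Fr(2) _ _ fk]) (use Sr cp r in auto)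
          then show ?thesis using Fr(1) by (simp add: ennreal_leI)
        qed
        have inc: "incseq (\<lambda>k x. ennreal ((indicator A x * min \<bar>f x\<bar> (real k + 1)) powr r))"
          by (intro incseq_SucI le_funI ennreal_leI powr_mono2) (use r in \<open>auto simp: indicator_def\<close>)
        have ptw: "ennreal (\<bar>f x\<bar> powr r) * indicator A x \<le> (SUP k. ennreal ((indicator A x * min \<bar>f x\<bar> (real k + 1)) powr r))" for x
        proof -
          obtain k :: nat where k: "\<bar>f x\<bar> \<le> real k + 1" using reals_Archimedean2[of "\<bar>f x\<bar>"] by (metis less_eq_real_def add.commute le_add_same_cancel2 order_trans of_nat_0_le_iff zero_le_one le_less_trans less_add_one)
          have "ennreal (\<bar>f x\<bar> powr r) * indicator A x = ennreal ((indicator A x * min \<bar>f x\<bar> (real k + 1)) powr r)"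
            using k r by (auto simp: indicator_def min_def)
          also have "\<dots> \<le> (SUP k. ennreal ((indicator A x * min \<bar>f x\<bar> (real k + 1)) powr r))" by (rule SUP_upper) simp
          finally show ?thesis .
        qed
        have "(\<integral>\<^sup>+ x\<in>A. ennreal (\<bar>f x\<bar> powr r) \<partial>M) \<le> (\<integral>\<^sup>+ x. (SUP k. ennreal ((indicator A x * min \<bar>f x\<bar> (real k + 1)) powr r)) \<partial>M)"
          by (intro nn_integral_mono ptw)
        also have "\<dots> = (SUP k. Fk k)"
          unfolding Fk_def by (rule nn_integral_monotone_convergence_SUP[OF inc]) simp
        also have "\<dots> \<le> ennreal Bd" by (rule SUP_least) (rule FkB)
        finally have GB: "(\<integral>\<^sup>+ x\<in>A. ennreal (\<bar>f x\<bar> powr r) \<partial>M) \<le> ennreal Bd" .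
        have Bd0: "0 \<le> Bd" by (simp add: Bd_def)
        have "enn_rpow (\<integral>\<^sup>+ x\<in>A. ennreal (\<bar>f x\<bar> powr r) \<partial>M) (1 / r) \<le> enn_rpow (ennreal Bd) (1/r)"
          by (rule enn_rpow_mono[OF GB]) (use r in simp)
        also have "\<dots> = ennreal (Sr / c)" using Bd0 Sr cp r by (simp add: enn_rpow_ennreal Bd_def powr_powr)
        finally have "ennreal c * enn_rpow (\<integral>\<^sup>+ x\<in>A. ennreal (\<bar>f x\<bar> powr r) \<partial>M) (1 / r) \<le> ennreal c * ennreal (Sr / c)"
          by (rule mult_left_mono) simp
        also have "\<dots> = S" using cp Sr by (simp add: ennreal_mult[symmetric] del: ennreal_mult)
        finally show ?thesis by (simp add: c_def a_def)
      qed
    qed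
  qed
  show ?thesis
    by (rule exI[of _ \<Gamma>], rule exI[of _ T]) (use P1 P2 P3 P4 P5 P6 in blast)
qed


end
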